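(* Let $E$ be a set and $T$ a set of clauses $X\Rightarrow Y$ ($X,Y\subseteq E$) that is rooted, i.e. no clause of the form $\emptyset\Rightarrow Y$ is a logical consequence of $T$. Define the Petri net $\mathcal{N}(T)$ as follows: its transitions are the elements of $E$; for each $e\in E$ there is a place containing one initial token, with no incoming arcs and a single outgoing arc (of weight 1) to $e$; and for each clause $(X\Rightarrow Y)\in T$ with $X$ finite there is a place with an arc of weight 1 to each transition in $X$, an arc of weight 1 from each transition in $Y$, and $|X|-1$ initial tokens. Then the configurations of $\mathcal{N}(T)$ are exactly the finite models of $T$ (multisets with values in $\{0,1\}$ being identified with sets).
   Context: A clause $X\Rightarrow Y$ stands for $\bigwedge X\Rightarrow\bigvee Y$; a model of $T$ is a set $m\subseteq E$ such that for every clause $X\Rightarrow Y$ in $T$, $X\subseteq m$ implies $Y\cap m\ne\emptyset$; a clause is a logical consequence of $T$ if it holds in every model of $T$. A Petri net is $(S,T,F,I)$ with disjoint sets $S$ (places) and $T$ (transitions), flow function $F:(S\times T\cup T\times S)\to\mathbb{N}$ and initial marking $I:S\to\mathbb{N}$. For a finite multiset $X:T\to\mathbb{N}$ put ${}^\bullet X(s)=\sum_t F(s,t)X(t)$ and $X^\bullet(s)=\sum_t X(t)F(t,s)$. A configuration of the net is a finite multiset $X$ of transitions such that $I-{}^\bullet X+X^\bullet\ge 0$ pointwise. *)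

theory Defs
  imports Main "HOL-Library.Multiset"
begin

type_synonym 'a clause = "'a set \<times> 'a set"

definition is_model :: "'a set \<Rightarrow> 'a clause set \<Rightarrow> 'a set \<Rightarrow> bool" where
  "is_model E T m \<longleftrightarrow> m \<subseteq> E \<and>
     (\<forall>(X, Y) \<in> T. X \<subseteq> m \<longrightarrow> Y \<inter> m \<noteq> {})"

definition logical_consequence :: "'a set \<Rightarrow> 'a clause set \<Rightarrow> 'a clause \<Rightarrow> bool" where
  "logical_consequence E T c \<longleftrightarrow>
     (\<forall>m. is_model E T m \<longrightarrow> (fst c \<subseteq> m \<longrightarrow> snd c \<inter> m \<noteq> {}))"

definition rooted :: "'a set \<Rightarrow> 'a clause set \<Rightarrow> bool" where
  "rooted E T \<longleftrightarrow> (\<forall>Y. Y \<subseteq> E \<longrightarrow> \<not> logical_consequence E T ({}, Y))"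

text \<open>Places and transitions live in different types, hence are
  disjoint. The flow function F on S\<times>T \<union> T\<times>S is split into flow_st (F(s,t)) and
  flow_ts (F(t,s)).\<close>
record ('s, 't) petri_net =
  places :: "'s set"
  transitions :: "'t set"
  flow_st :: "'s \<Rightarrow> 't \<Rightarrow> nat"
  flow_ts :: "'t \<Rightarrow> 's \<Rightarrow> nat"
  init :: "'s \<Rightarrow> nat"

definition preset_ms :: "('s, 't) petri_net \<Rightarrow> 't multiset \<Rightarrow> 's \<Rightarrow> nat" where
  "preset_ms N X s = (\<Sum>t\<in>set_mset X. flow_st N s t * count X t)"

definition postset_ms :: "('s, 't) petri_net \<Rightarrow> 't multiset \<Rightarrow> 's \<Rightarrow> nat" where
  "postset_ms N X s = (\<Sum>t\<in>set_mset X. count X t * flow_ts N t s)"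

definition is_configuration :: "('s, 't) petri_net \<Rightarrow> 't multiset \<Rightarrow> bool" where
  "is_configuration N X \<longleftrightarrow> set_mset X \<subseteq> transitions N \<and>
     (\<forall>s \<in> places N. int (init N s) - int (preset_ms N X s) + int (postset_ms N X s) \<ge> 0)"

datatype 'a place = ElemPlace 'a | ClausePlace "'a clause"

definition net_of :: "'a set \<Rightarrow> 'a clause set \<Rightarrow> ('a place, 'a) petri_net" where
  "net_of E T = \<lparr>
     places = ElemPlace ` E \<union> ClausePlace ` {c \<in> T. finite (fst c)},
     transitions = E,
     flow_st = (\<lambda>s t. case s of
                   ElemPlace e \<Rightarrow> (if t = e then 1 else 0)
                 | ClausePlace (X, Y) \<Rightarrow> (if t \<in> X then 1 else 0)),
     flow_ts = (\<lambda>t s. case s of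
                   ElemPlace e \<Rightarrow> 0
                 | ClausePlace (X, Y) \<Rightarrow> (if t \<in> Y then 1 else 0)),
     init = (\<lambda>s. case s of
                   ElemPlace e \<Rightarrow> 1
                 | ClausePlace (X, Y) \<Rightarrow> card X - 1) \<rparr>"

end

theory Submission
  imports Defs
begin

lemma ind_sum: "finite m \<Longrightarrow> (\<Sum>t\<in>m. (if t \<in> X then 1 else 0::nat)) = card (m \<inter> X)"
  by (simp add: sum.If_cases Int_def)

lemma pre_mset_set:
  assumes "finite m"
  shows "preset_ms (net_of E T) (mset_set m) (ElemPlace e) = (if e \<in> m then 1 else 0)"
    and "preset_ms (net_of E T) (mset_set m) (ClausePlace (X, Y)) = card (m \<inter> X)"
    and "postset_ms (net_of E T) (mset_set m) (ElemPlace e) = 0"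
    and "postset_ms (net_of E T) (mset_set m) (ClausePlace (X, Y)) = card (m \<inter> Y)"
proof -
  have c: "\<And>t. t \<in> m \<Longrightarrow> count (mset_set m) t = 1" using assms by (simp add: count_mset_set)
  have sm: "set_mset (mset_set m) = m" using assms by simp
  show "preset_ms (net_of E T) (mset_set m) (ElemPlace e) = (if e \<in> m then 1 else 0)"
    unfolding preset_ms_def sm using assms c
    by (simp add: net_of_def ind_sum[of m "{e}", simplified] cong: sum.cong)
  show "preset_ms (net_of E T) (mset_set m) (ClausePlace (X, Y)) = card (m \<inter> X)"
    unfolding preset_ms_def sm
    by (simp add: net_of_def c ind_sum[OF assms, symmetric] cong: sum.cong)
  show "postset_ms (net_of E T) (mset_set m) (ElemPlace e) = 0"
    unfolding postset_ms_def by (simp add: net_of_def)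
  show "postset_ms (net_of E T) (mset_set m) (ClausePlace (X, Y)) = card (m \<inter> Y)"
    unfolding postset_ms_def sm
    by (simp add: net_of_def c ind_sum[OF assms, symmetric] cong: sum.cong)
qed


lemma pre_elem_gen:
  assumes "t \<in># M"
  shows "preset_ms (net_of E T) M (ElemPlace t) = count M t"
proof -
  have "preset_ms (net_of E T) M (ElemPlace t) = (\<Sum>s\<in>set_mset M. if s = t then count M t else 0)"
    unfolding preset_ms_def by (rule sum.cong) (auto simp: net_of_def)
  also have "\<dots> = count M t" using assms by (simp add: sum.delta)
  finally show ?thesis .
qed

lemma conf_set:
  assumes "is_configuration (net_of E T) M"
  shows "M = mset_set (set_mset M)"
proof (rule multiset_eqI)
  fix t
  show "count M t = count (mset_set (set_mset M)) t"
  proof (cases "t \<in># M")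
    case True
    then have "t \<in> E" using assms by (auto simp: is_configuration_def net_of_def)
    then have "ElemPlace t \<in> places (net_of E T)" by (simp add: net_of_def)
    then have "int (init (net_of E T) (ElemPlace t)) - int (count M t)
        + int (postset_ms (net_of E T) M (ElemPlace t)) \<ge> 0"
      using assms pre_elem_gen[OF True, of E T] unfolding is_configuration_def by metis
    moreover have "postset_ms (net_of E T) M (ElemPlace t) = 0"
      unfolding postset_ms_def by (simp add: net_of_def)
    ultimately have "count M t \<le> 1" by (simp add: net_of_def)
    moreover have "count M t \<noteq> 0" using True by simp
    ultimately have "count M t = 1" by linarith
    then show ?thesis using True by simp
  next
    case False
    then show ?thesis by (simp add: not_in_iff)
  qed
qed

lemma init_net: "init (net_of E T) (ClausePlace (X, Y)) = card X - 1"
  by (simp add: net_of_def)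

lemma conf_iff:
  assumes "finite m" "\<forall>(X, Y) \<in> T. X \<noteq> {}"
  shows "is_configuration (net_of E T) (mset_set m) \<longleftrightarrow> is_model E T m"
proof
  assume H: "is_configuration (net_of E T) (mset_set m)"
  have mE: "m \<subseteq> E" using H assms(1) by (simp add: is_configuration_def net_of_def)
  show "is_model E T m" unfolding is_model_def
  proof (intro conjI mE ballI, clarify)
    fix X Y assume XY: "(X, Y) \<in> T" "X \<subseteq> m" "Y \<inter> m = {}"
    have fX: "finite X" using XY(2) assms(1) finite_subset by blast
    have ne: "X \<noteq> {}" using assms(2) XY(1) by auto
    have "ClausePlace (X, Y) \<in> places (net_of E T)" using XY(1) fX by (force simp: net_of_def)
    then have "int (card X - 1) - int (card (m \<inter> X)) + int (card (m \<inter> Y)) \<ge> 0"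
      using H pre_mset_set(2,4)[OF assms(1), of E T X Y] unfolding is_configuration_def
      by (metis (no_types, lifting) init_net)
    moreover have "m \<inter> X = X" using XY(2) by auto
    moreover have "m \<inter> Y = {}" using XY(3) by auto
    moreover have "card X > 0" using fX ne by (simp add: card_gt_0_iff)
    ultimately show False by simp
  qed
next
  assume H: "is_model E T m"
  have mE: "m \<subseteq> E" using H by (simp add: is_model_def)
  show "is_configuration (net_of E T) (mset_set m)"
    unfolding is_configuration_def
  proof (intro conjI ballI)
    show "set_mset (mset_set m) \<subseteq> transitions (net_of E T)" using mE assms(1) by (simp add: net_of_def)
  next
    fix s assume s: "s \<in> places (net_of E T)"
    show "0 \<le> int (init (net_of E T) s) - int (preset_ms (net_of E T) (mset_set m) s)
        + int (postset_ms (net_of E T) (mset_set m) s)"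
    proof (cases s)
      case (ElemPlace e)
      then show ?thesis using pre_mset_set[OF assms(1)] by (simp add: net_of_def)
    next
      case (ClausePlace c)
      obtain X Y where c: "c = (X, Y)" by fastforce
      have XY: "(X, Y) \<in> T" "finite X" using s ClausePlace c by (auto simp: net_of_def)
      have le: "card (m \<inter> X) \<le> card X" using XY(2) by (simp add: card_mono)
      have "card (m \<inter> X) \<le> card X - 1 + card (m \<inter> Y)"
      proof (cases "X \<subseteq> m")
        case True
        then have "Y \<inter> m \<noteq> {}" using H XY(1) unfolding is_model_def by auto
        then have "card (m \<inter> Y) > 0" using assms(1) by (simp add: card_gt_0_iff Int_commute)
        then show ?thesis using le by linarith
      next
        case False
        then have "m \<inter> X \<subset> X" by auto
        then have "card (m \<inter> X) < card X" using XY(2) by (simp add: psubset_card_mono)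
        then show ?thesis by linarith
      qed
      then show ?thesis using ClausePlace c pre_mset_set(2,4)[OF assms(1), of E T X Y]
        by (simp add: net_of_def)
    qed
  qed
qed

theorem mainTheorem5:
  fixes E :: "'a set" and T :: "'a clause set"
  assumes "\<forall>(X, Y) \<in> T. X \<subseteq> E \<and> Y \<subseteq> E"
    and "rooted E T"
  shows "{M. is_configuration (net_of E T) M} = mset_set ` {m. finite m \<and> is_model E T m}"
proof -
  have ne: "\<forall>(X, Y) \<in> T. X \<noteq> {}"
  proof (clarify)
    fix Y assume "({}, Y) \<in> T"
    then have "Y \<subseteq> E" "logical_consequence E T ({}, Y)"
      using assms(1) by (auto simp: logical_consequence_def is_model_def)
    then show False using assms(2) by (auto simp: rooted_def)
  qed
  show ?thesis
  proof (intro set_eqI iffI)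
    fix M assume "M \<in> {M. is_configuration (net_of E T) M}"
    then have C: "is_configuration (net_of E T) M" by simp
    have eq: "M = mset_set (set_mset M)" by (rule conf_set[OF C])
    have "is_model E T (set_mset M)" using C eq conf_iff[OF _ ne, of "set_mset M" E] by simp
    then show "M \<in> mset_set ` {m. finite m \<and> is_model E T m}" using eq by blast
  next
    fix M assume "M \<in> mset_set ` {m. finite m \<and> is_model E T m}"
    then obtain m where "finite m" "is_model E T m" "M = mset_set m" by blast
    then show "M \<in> {M. is_configuration (net_of E T) M}" using conf_iff[OF _ ne] by simp
  qed
qed

end
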